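(* Let $G$ be a simple graph with adjacency matrix $A$. If $\mathrm{LCP}(A+I,-\mathbf{e})$ is w-unique, then $\mathbf{e}^\top x$ is constant over all solutions $x$ of $\mathrm{LCP}(A+I,-\mathbf{e})$, and consequently $G$ is well-covered.
   Context: $x$ solves $\mathrm{LCP}(M,q)$ if $x\geq 0$, $Mx+q\geq 0$ and $x^\top(Mx+q)=0$; here $M=A+I$, $q=-\mathbf{e}$ ($I$ identity, $\mathbf{e}$ all-ones vector). $\mathrm{LCP}(M,q)$ is w-unique if the vector $Mx+q$ is the same for all solutions $x$. A graph is well-covered if all its maximal independent sets have the same cardinality. *)

theory Defs
  imports Complex_Main
begin

text \<open>A finite simple graph on the (finite) vertex type 'v, given by a symmetric,
irreflexive adjacency relation E. Vectors in R^V are functions 'v => real,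
square matrices are functions 'v => 'v => real.\<close>

definition simple_graph :: "('v::finite \<Rightarrow> 'v \<Rightarrow> bool) \<Rightarrow> bool" where
  "simple_graph E \<longleftrightarrow> (\<forall>u v. E u v \<longleftrightarrow> E v u) \<and> (\<forall>v. \<not> E v v)"

definition adj_matrix :: "('v::finite \<Rightarrow> 'v \<Rightarrow> bool) \<Rightarrow> 'v \<Rightarrow> 'v \<Rightarrow> real" where
  "adj_matrix E u v = (if E u v then 1 else 0)"

definition id_matrix :: "'v::finite \<Rightarrow> 'v \<Rightarrow> real" where
  "id_matrix u v = (if u = v then 1 else 0)"

definition all_ones :: "'v::finite \<Rightarrow> real" where
  "all_ones v = 1"

definition lcp_w :: "('v::finite \<Rightarrow> 'v \<Rightarrow> real) \<Rightarrow> ('v \<Rightarrow> real) \<Rightarrow> ('v \<Rightarrow> real) \<Rightarrow> 'v \<Rightarrow> real" where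
  "lcp_w M q x i = (\<Sum>j\<in>UNIV. M i j * x j) + q i"

definition solves_LCP :: "('v::finite \<Rightarrow> 'v \<Rightarrow> real) \<Rightarrow> ('v \<Rightarrow> real) \<Rightarrow> ('v \<Rightarrow> real) \<Rightarrow> bool" where
  "solves_LCP M q x \<longleftrightarrow> (\<forall>i. x i \<ge> 0) \<and> (\<forall>i. lcp_w M q x i \<ge> 0)
     \<and> (\<Sum>i\<in>UNIV. x i * lcp_w M q x i) = 0"

definition w_unique :: "('v::finite \<Rightarrow> 'v \<Rightarrow> real) \<Rightarrow> ('v \<Rightarrow> real) \<Rightarrow> bool" where
  "w_unique M q \<longleftrightarrow> (\<forall>x y. solves_LCP M q x \<and> solves_LCP M q y \<longrightarrow> lcp_w M q x = lcp_w M q y)"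

definition independent_set :: "('v \<Rightarrow> 'v \<Rightarrow> bool) \<Rightarrow> 'v set \<Rightarrow> bool" where
  "independent_set E S \<longleftrightarrow> (\<forall>u\<in>S. \<forall>v\<in>S. \<not> E u v)"

definition maximal_independent_set :: "('v \<Rightarrow> 'v \<Rightarrow> bool) \<Rightarrow> 'v set \<Rightarrow> bool" where
  "maximal_independent_set E S \<longleftrightarrow> independent_set E S \<and>
     (\<forall>T. independent_set E T \<and> S \<subseteq> T \<longrightarrow> T = S)"

definition well_covered :: "('v::finite \<Rightarrow> 'v \<Rightarrow> bool) \<Rightarrow> bool" where
  "well_covered E \<longleftrightarrow> (\<forall>S T. maximal_independent_set E S \<and> maximal_independent_set E T
     \<longrightarrow> card S = card T)"

end

theory Submission
  imports Defs
begin

lemma cross_eq: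
  fixes M :: "'v::finite \<Rightarrow> 'v \<Rightarrow> real"
  assumes "(\<Sum>i\<in>UNIV. x i * lcp_w M (\<lambda>i. - all_ones i) y i) = 0"
  shows "(\<Sum>i\<in>UNIV. x i * (\<Sum>j\<in>UNIV. M i j * y j)) = (\<Sum>i\<in>UNIV. x i)"
proof -
  have "(\<Sum>i\<in>UNIV. x i * lcp_w M (\<lambda>i. - all_ones i) y i)
      = (\<Sum>i\<in>UNIV. x i * (\<Sum>j\<in>UNIV. M i j * y j) - x i)"
    by (simp add: lcp_w_def all_ones_def algebra_simps)
  also have "\<dots> = (\<Sum>i\<in>UNIV. x i * (\<Sum>j\<in>UNIV. M i j * y j)) - (\<Sum>i\<in>UNIV. x i)"
    by (simp add: sum_subtractf)
  finally show ?thesis using assms by simp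
qed

lemma swap_sym:
  fixes M :: "'v::finite \<Rightarrow> 'v \<Rightarrow> real"
  assumes "\<And>i j. M i j = M j i"
  shows "(\<Sum>i\<in>UNIV. x i * (\<Sum>j\<in>UNIV. M i j * y j)) = (\<Sum>i\<in>UNIV. y i * (\<Sum>j\<in>UNIV. M i j * x j))"
proof -
  have "(\<Sum>i\<in>UNIV. x i * (\<Sum>j\<in>UNIV. M i j * y j)) = (\<Sum>i\<in>UNIV. \<Sum>j\<in>UNIV. x i * M i j * y j)"
    by (simp add: sum_distrib_left mult.assoc)
  also have "\<dots> = (\<Sum>j\<in>UNIV. \<Sum>i\<in>UNIV. x i * M i j * y j)"
    by (rule sum.swap)
  also have "\<dots> = (\<Sum>j\<in>UNIV. y j * (\<Sum>i\<in>UNIV. M j i * x i))"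
    by (simp add: sum_distrib_left assms algebra_simps)
  finally show ?thesis .
qed

theorem lemma8:
  fixes E :: "'v::finite \<Rightarrow> 'v \<Rightarrow> bool"
  assumes "simple_graph E"
    and "w_unique (\<lambda>i j. adj_matrix E i j + id_matrix i j) (\<lambda>i. - all_ones i)"
  shows "(\<forall>x y. solves_LCP (\<lambda>i j. adj_matrix E i j + id_matrix i j) (\<lambda>i. - all_ones i) x
              \<and> solves_LCP (\<lambda>i j. adj_matrix E i j + id_matrix i j) (\<lambda>i. - all_ones i) y
            \<longrightarrow> (\<Sum>i\<in>UNIV. all_ones i * x i) = (\<Sum>i\<in>UNIV. all_ones i * y i))
         \<and> well_covered E"
proof -
  define M where "M = (\<lambda>i j. adj_matrix E i j + id_matrix i j)"
  define q :: "'v \<Rightarrow> real" where "q = (\<lambda>i. - all_ones i)"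
  have symE: "\<And>u v. E u v = E v u" and irr: "\<And>v. \<not> E v v"
    using assms(1) by (auto simp: simple_graph_def)
  have symM: "\<And>i j. M i j = M j i"
    unfolding M_def adj_matrix_def id_matrix_def using symE by auto
  have P1: "\<forall>x y. solves_LCP M q x \<and> solves_LCP M q y
            \<longrightarrow> (\<Sum>i\<in>UNIV. all_ones i * x i) = (\<Sum>i\<in>UNIV. all_ones i * y i)"
  proof (intro allI impI)
    fix x y assume xy: "solves_LCP M q x \<and> solves_LCP M q y"
    hence weq: "lcp_w M q x = lcp_w M q y"
      using assms(2) unfolding w_unique_def M_def q_def by blast
    have a: "(\<Sum>i\<in>UNIV. x i * lcp_w M q y i) = 0"
      using xy weq unfolding solves_LCP_def by simp
    have b: "(\<Sum>i\<in>UNIV. y i * lcp_w M q x i) = 0"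
      using xy weq unfolding solves_LCP_def by simp
    have "(\<Sum>i\<in>UNIV. x i) = (\<Sum>i\<in>UNIV. y i)"
      using cross_eq[OF a[unfolded q_def]] cross_eq[OF b[unfolded q_def]] swap_sym[where M=M and x=x and y=y, OF symM]
      by simp
    thus "(\<Sum>i\<in>UNIV. all_ones i * x i) = (\<Sum>i\<in>UNIV. all_ones i * y i)"
      by (simp add: all_ones_def)
  qed
  have ind_sol: "solves_LCP M q (\<lambda>i. if i \<in> S then 1 else 0)" if mS: "maximal_independent_set E S" for S
  proof -
    define x :: "'v \<Rightarrow> real" where "x = (\<lambda>i. if i \<in> S then 1 else 0)"
    have indS: "independent_set E S" using mS by (simp add: maximal_independent_set_def)
    have w: "lcp_w M q x i = x i + (\<Sum>j\<in>UNIV. adj_matrix E i j * x j) - 1" for i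
    proof -
      have "(\<Sum>j\<in>UNIV. M i j * x j) = (\<Sum>j\<in>UNIV. adj_matrix E i j * x j) + (\<Sum>j\<in>UNIV. id_matrix i j * x j)"
        by (simp add: M_def algebra_simps sum.distrib)
      moreover have "(\<Sum>j\<in>UNIV. id_matrix i j * x j) = x i"
        by (simp add: id_matrix_def if_distrib[where f="\<lambda>a. a * _"] cong: if_cong)
      ultimately show ?thesis by (simp add: lcp_w_def q_def all_ones_def)
    qed
    have nn: "\<And>j. adj_matrix E i j * x j \<ge> 0" for i
      by (simp add: adj_matrix_def x_def)
    have inS: "lcp_w M q x i = 0" if "i \<in> S" for i
    proof -
      have "(\<Sum>j\<in>UNIV. adj_matrix E i j * x j) = 0"
        using indS that by (intro sum.neutral) (auto simp: adj_matrix_def x_def independent_set_def)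
      thus ?thesis using w[of i] that by (simp add: x_def)
    qed
    have notS: "lcp_w M q x i \<ge> 0" if "i \<notin> S" for i
    proof -
      have "\<not> independent_set E (insert i S)"
      proof
        assume "independent_set E (insert i S)"
        hence "insert i S = S" using mS unfolding maximal_independent_set_def by blast
        thus False using that by blast
      qed
      then obtain j where j: "j \<in> S" "E i j"
        using indS irr symE unfolding independent_set_def by auto
      have "adj_matrix E i j * x j \<le> (\<Sum>j\<in>UNIV. adj_matrix E i j * x j)"
        by (rule member_le_sum) (auto simp: nn)
      hence "1 \<le> (\<Sum>j\<in>UNIV. adj_matrix E i j * x j)"
        using j by (simp add: adj_matrix_def x_def)
      thus ?thesis using w[of i] that by (simp add: x_def)
    qed
    have "(\<Sum>i\<in>UNIV. x i * lcp_w M q x i) = 0"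
    proof (intro sum.neutral ballI)
      fix i show "x i * lcp_w M q x i = 0"
        using inS[of i] by (cases "i \<in> S") (simp_all add: x_def)
    qed
    moreover have "\<forall>i. lcp_w M q x i \<ge> 0" using inS notS by (metis order_refl)
    moreover have "\<forall>i. x i \<ge> 0" by (simp add: x_def)
    ultimately show ?thesis unfolding solves_LCP_def x_def by simp
  qed
  have cardS: "(\<Sum>i\<in>UNIV. all_ones i * (if i \<in> S then 1 else 0)) = real (card S)" for S :: "'v set"
    by (simp add: all_ones_def sum.If_cases)
  have "well_covered E"
    unfolding well_covered_def
  proof (intro allI impI)
    fix S T assume "maximal_independent_set E S \<and> maximal_independent_set E T"
    hence "solves_LCP M q (\<lambda>i. if i \<in> S then 1 else 0)" "solves_LCP M q (\<lambda>i. if i \<in> T then 1 else 0)"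
      using ind_sol by auto
    hence "real (card S) = real (card T)" using P1 cardS by metis
    thus "card S = card T" by simp
  qed
  with P1 show ?thesis unfolding M_def q_def by blast
qed

end
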